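(* For every $n$-qubit pure state $\ket\psi$, the support of $p_\psi$ is contained in $\mathrm{Weyl}(\ket\psi)^\perp$.
   Context: For $x=(a,b)\in\mathbb F_2^{2n}$, $W_x = i^{a\cdot b}X^{a_1}Z^{b_1}\otimes\cdots\otimes X^{a_n}Z^{b_n}$ ($a\cdot b$ over the integers); $p_\psi(x)=2^{-n}\braket{\psi|W_x|\psi}^2$; $\mathrm{Weyl}(\ket\psi)=\{x:W_x\ket\psi=\pm\ket\psi\}$ (a subspace). The symplectic product is $[x,y]=\sum_{j=1}^n(x_jy_{n+j}+x_{n+j}y_j)\bmod 2$, and $T^\perp=\{a:[x,a]=0\ \forall x\in T\}$. *)

theory Defs
  imports Complex_Main
begin

text \<open>An n-qubit state is a function psi :: nat => complex whose relevant
 entries are psi k for computational basis indices k < 2^n; qubit j (0 <= j < n) corresponds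
 to bit j of k. A point x of F_2^{2n} is a function nat => bool vanishing at indices >= 2n;
 x = (a,b) with a_j = x j and b_j = x (n+j) for j < n (True means 1).\<close>

definition F2vecs :: "nat \<Rightarrow> (nat \<Rightarrow> bool) set" where
  "F2vecs n = {x. \<forall>j\<ge>2*n. \<not> x j}"

definition adotb :: "nat \<Rightarrow> (nat \<Rightarrow> bool) \<Rightarrow> nat" where
  "adotb n x = card {j. j < n \<and> x j \<and> x (n+j)}"

text \<open>Matrix entry (r,c) of W_x = i^{a.b} X^{a_1}Z^{b_1} (x) ... (x) X^{a_n}Z^{b_n}:
  X^a Z^b |c> = (-1)^{b.c} |c xor a>.\<close>
definition Weyl_op :: "nat \<Rightarrow> (nat \<Rightarrow> bool) \<Rightarrow> nat \<Rightarrow> nat \<Rightarrow> complex" where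
  "Weyl_op n x r c =
     (if (\<forall>j<n. bit r j = (bit c j \<noteq> x j))
      then \<i> ^ adotb n x * (-1) ^ card {j. j < n \<and> x (n+j) \<and> bit c j}
      else 0)"

definition Weyl_apply :: "nat \<Rightarrow> (nat \<Rightarrow> bool) \<Rightarrow> (nat \<Rightarrow> complex) \<Rightarrow> nat \<Rightarrow> complex" where
  "Weyl_apply n x psi r = (\<Sum>c<2^n. Weyl_op n x r c * psi c)"

definition pure_state :: "nat \<Rightarrow> (nat \<Rightarrow> complex) \<Rightarrow> bool" where
  "pure_state n psi \<longleftrightarrow> (\<Sum>k<2^n. (cmod (psi k))^2) = 1"

definition expval :: "nat \<Rightarrow> (nat \<Rightarrow> complex) \<Rightarrow> (nat \<Rightarrow> bool) \<Rightarrow> complex" where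
  "expval n psi x = (\<Sum>r<2^n. cnj (psi r) * Weyl_apply n x psi r)"

definition p_psi :: "nat \<Rightarrow> (nat \<Rightarrow> complex) \<Rightarrow> (nat \<Rightarrow> bool) \<Rightarrow> complex" where
  "p_psi n psi x = (expval n psi x)^2 / 2^n"

definition support_p :: "nat \<Rightarrow> (nat \<Rightarrow> complex) \<Rightarrow> (nat \<Rightarrow> bool) set" where
  "support_p n psi = {x \<in> F2vecs n. p_psi n psi x \<noteq> 0}"

definition Weyl_set :: "nat \<Rightarrow> (nat \<Rightarrow> complex) \<Rightarrow> (nat \<Rightarrow> bool) set" where
  "Weyl_set n psi = {x \<in> F2vecs n.
      (\<forall>r<2^n. Weyl_apply n x psi r = psi r) \<or> (\<forall>r<2^n. Weyl_apply n x psi r = - psi r)}"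

definition sympl :: "nat \<Rightarrow> (nat \<Rightarrow> bool) \<Rightarrow> (nat \<Rightarrow> bool) \<Rightarrow> bool" where
  "sympl n x y = odd (card {j. j < n \<and> x j \<and> y (n+j)} + card {j. j < n \<and> x (n+j) \<and> y j})"

definition symp_perp :: "nat \<Rightarrow> (nat \<Rightarrow> bool) set \<Rightarrow> (nat \<Rightarrow> bool) set" where
  "symp_perp n T = {a \<in> F2vecs n. \<forall>x\<in>T. \<not> sympl n x a}"

end

theory Submission
  imports Defs
begin

lemma sgprod: "(-1::complex)^card{j::nat. j<n \<and> P j} = (\<Prod>j<n. if P j then -1 else 1)"
proof (induction n)
  case (Suc n)
  have "{j. j<Suc n \<and> P j} = (if P n then insert n {j. j<n \<and> P j} else {j. j<n \<and> P j})"
    by (auto simp: less_Suc_eq)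
  then show ?case using Suc by auto
qed simp

lemma lt2: "(m::nat) < 2^n \<longleftrightarrow> (\<forall>j\<ge>n. \<not> bit m j)"
proof -
  have "m < 2^n \<longleftrightarrow> take_bit n m = m" by (simp add: take_bit_nat_eq_self_iff)
  also have "\<dots> \<longleftrightarrow> (\<forall>j\<ge>n. \<not> bit m j)"
    by (metis bit_eq_iff bit_take_bit_iff not_le)
  finally show ?thesis .
qed

fun msk :: "nat \<Rightarrow> (nat \<Rightarrow> bool) \<Rightarrow> nat" where
  "msk 0 x = 0"
| "msk (Suc n) x = (if x n then set_bit n (msk n x) else msk n x)"

lemma bit_msk: "bit (msk n x) j \<longleftrightarrow> j<n \<and> x j"
  by (induction n) (auto simp: bit_set_bit_iff less_Suc_eq)

lemma msk_lt: "msk n x < 2^n"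
  by (simp add: lt2 bit_msk)

lemma xor_lt: "(r::nat) < 2^n \<Longrightarrow> c < 2^n \<Longrightarrow> xor r c < 2^n"
  by (simp add: lt2 bit_xor_iff)

lemma xor_invol: "xor (xor (r::nat) k) k = r"
  by (rule bit_eqI) (auto simp: bit_xor_iff)

lemma xor_comm3: "xor (xor (r::nat) k) m = xor (xor r m) k"
  by (simp add: bit_eq_iff bit_xor_iff) blast

lemma uniq:
  assumes "r < 2^n" "c < 2^n"
  shows "(\<forall>j<n. bit r j = (bit c j \<noteq> x j)) \<longleftrightarrow> c = xor r (msk n x)"
proof
  assume h: "\<forall>j<n. bit r j = (bit c j \<noteq> x j)"
  show "c = xor r (msk n x)"
  proof (rule bit_eqI)
    fix j show "bit c j = bit (xor r (msk n x)) j"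
    proof (cases "j < n")
      case True then show ?thesis using h by (auto simp: bit_xor_iff bit_msk)
    next
      case False then show ?thesis using assms xor_lt[OF assms(1) msk_lt]
        by (simp add: lt2)
    qed
  qed
next
  assume "c = xor r (msk n x)"
  then show "\<forall>j<n. bit r j = (bit c j \<noteq> x j)" by (auto simp: bit_xor_iff bit_msk)
qed

definition sg :: "nat \<Rightarrow> (nat \<Rightarrow> bool) \<Rightarrow> nat \<Rightarrow> complex" where
  "sg n B c = (-1)^card {j. j < n \<and> B j \<and> bit c j}"

lemma sg_xor: "sg n B c * sg n B (xor c m) = sg n B m"
proof -
  have "sg n B c * sg n B (xor c m) =
     (\<Prod>j<n. (if B j \<and> bit c j then -1 else 1) * (if B j \<and> bit (xor c m) j then -1 else 1))"
    unfolding sg_def sgprod prod.distrib ..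
  also have "\<dots> = (\<Prod>j<n. if B j \<and> bit m j then -1 else 1)"
    by (rule prod.cong) (auto simp: bit_xor_iff)
  finally show ?thesis unfolding sg_def sgprod .
qed

lemma sg_sq: "sg n B c * sg n B c = 1"
  unfolding sg_def by (simp flip: power_add add: power_even_eq)

lemma cnj_sg: "cnj (sg n B c) = sg n B c"
  unfolding sg_def by simp

lemma Weyl_apply_eq:
  assumes "r < 2^n"
  shows "Weyl_apply n x psi r = \<i> ^ adotb n x * sg n (\<lambda>j. x (n+j)) (xor r (msk n x)) * psi (xor r (msk n x))"
proof -
  let ?c = "xor r (msk n x)"
  have "Weyl_apply n x psi r = (\<Sum>c<2^n. if c = ?c then
        \<i> ^ adotb n x * sg n (\<lambda>j. x (n+j)) c * psi c else 0)"
    unfolding Weyl_apply_def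
  proof (rule sum.cong)
    fix c assume "c \<in> {..<(2::nat)^n}"
    then have "c < 2^n" by simp
    then have "Weyl_op n x r c = (if c = ?c then \<i> ^ adotb n x * sg n (\<lambda>j. x (n+j)) c else 0)"
      unfolding Weyl_op_def uniq[OF assms \<open>c < 2^n\<close>] sg_def by simp
    then show "Weyl_op n x r c * psi c = (if c = ?c then
        \<i> ^ adotb n x * sg n (\<lambda>j. x (n+j)) c * psi c else 0)" by simp
  qed simp
  also have "\<dots> = \<i> ^ adotb n x * sg n (\<lambda>j. x (n+j)) ?c * psi ?c"
    using xor_lt[OF assms msk_lt] by simp
  finally show ?thesis .
qed

lemma expval_eq:
  "expval n psi x = (\<Sum>t<2^n. cnj (psi t) * (\<i> ^ adotb n x * sg n (\<lambda>j. x (n+j)) (xor t (msk n x)) * psi (xor t (msk n x))))"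
  unfolding expval_def by (rule sum.cong) (auto simp: Weyl_apply_eq)

lemma sg_xor2: "sg n B (xor c k) = sg n B c * sg n B k"
proof -
  have "sg n B c * sg n B (xor c k) = sg n B k" by (rule sg_xor)
  then have "sg n B c * (sg n B c * sg n B (xor c k)) = sg n B c * sg n B k" by simp
  then show ?thesis by (simp add: mult.assoc[symmetric] sg_sq)
qed

lemma cnj_unit: "cnj (\<i> ^ a) * \<i> ^ a = 1"
proof -
  have "cnj (\<i> ^ a) * \<i> ^ a = ((-\<i>) * \<i>) ^ a"
    by (simp only: power_mult_distrib complex_cnj_power complex_cnj_i)
  also have "\<dots> = 1" by simp
  finally show ?thesis .
qed

lemma anticomm_zero:
  assumes s1: "s * s = 1" and s2: "cnj s = s"
    and hy: "\<forall>r<2^n. Weyl_apply n y psi r = s * psi r"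
    and odd: "sympl n y x"
  shows "expval n psi x = 0"
proof -
  define k where "k = msk n y"
  define m where "m = msk n x"
  define wy where "wy = \<i> ^ adotb n y"
  define wx where "wx = \<i> ^ adotb n x"
  define Sy where "Sy = sg n (\<lambda>j. y (n+j))"
  define Sx where "Sx = sg n (\<lambda>j. x (n+j))"
  define f where "f t = cnj (psi t) * (wx * Sx (xor t m) * psi (xor t m))" for t
  have kl: "k < 2^n" unfolding k_def by (rule msk_lt)
  have ml: "m < 2^n" unfolding m_def by (rule msk_lt)
  have P1: "psi (xor t k) = s * wy * Sy t * psi t" if "t < 2^n" for t
  proof -
    have tk: "xor t k < 2^n" using xor_lt[OF that kl] .
    have "wy * Sy t * psi t = s * psi (xor t k)"
      using hy[rule_format, OF tk] Weyl_apply_eq[OF tk, of y psi]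
      by (simp add: xor_invol k_def wy_def Sy_def)
    then have "s * (wy * Sy t * psi t) = s * s * psi (xor t k)" by (simp add: mult.assoc)
    then show ?thesis using s1 by (simp add: mult.assoc)
  qed
  have cs: "cnj (Sy t) = Sy t" for t unfolding Sy_def by (rule cnj_sg)
  have sq: "Sy t * Sy t = 1" for t unfolding Sy_def by (rule sg_sq)
  have cw: "cnj wy * wy = 1" unfolding wy_def by (rule cnj_unit)
  have Sym: "Sy t * Sy (xor t m) = Sy m" for t unfolding Sy_def by (rule sg_xor)
  have c1: "Sy m = (-1)^card {j. j < n \<and> y (n+j) \<and> x j}"
    unfolding Sy_def sg_def m_def
  proof -
    have "{j. j < n \<and> y (n + j) \<and> bit (msk n x) j} = {j. j < n \<and> y (n+j) \<and> x j}"
      by (auto simp: bit_msk)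
    then show "(- 1) ^ card {j. j < n \<and> y (n + j) \<and> bit (msk n x) j} = (-1::complex)^card {j. j < n \<and> y (n+j) \<and> x j}"
      by simp
  qed
  have c2: "Sx k = (-1)^card {j. j < n \<and> y j \<and> x (n+j)}"
    unfolding Sx_def sg_def k_def 
  proof -
    have "{j. j < n \<and> x (n + j) \<and> bit (msk n y) j} = {j. j < n \<and> y j \<and> x (n+j)}"
      by (auto simp: bit_msk)
    then show "(- 1) ^ card {j. j < n \<and> x (n + j) \<and> bit (msk n y) j} = (-1::complex)^card {j. j < n \<and> y j \<and> x (n+j)}"
      by simp
  qed
  have neg: "Sy m * Sx k = -1"
    using odd unfolding c1 c2 sympl_def by (simp flip: power_add add: add.commute)
  have fk: "f (xor t k) = - f t" if "t < 2^n" for t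
  proof -
    have tm: "xor t m < 2^n" using xor_lt[OF that ml] .
    have "f (xor t k) = cnj (psi (xor t k)) * (wx * Sx (xor (xor t m) k) * psi (xor (xor t m) k))"
      unfolding f_def by (simp add: xor_comm3)
    also have "\<dots> = cnj (s * wy * Sy t * psi t) * (wx * (Sx (xor t m) * Sx k) * (s * wy * Sy (xor t m) * psi (xor t m)))"
      using P1[OF that] P1[OF tm] sg_xor2 Sx_def by simp
    also have "\<dots> = (s * s) * (cnj wy * wy) * (Sy t * Sy (xor t m)) * Sx k * f t"
      unfolding f_def using s2 cs by (simp add: algebra_simps)
    also have "\<dots> = (Sy m * Sx k) * f t" using s1 cw Sym by simp
    finally show ?thesis using neg by simp
  qed
  have E: "expval n psi x = sum f {..<2^n}"
    unfolding expval_eq f_def wx_def Sx_def m_def ..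
  have "sum f {..<2^n} = sum (\<lambda>t. f (xor t k)) {..<2^n}"
    by (rule sum.reindex_bij_witness[where i="\<lambda>t. xor t k" and j="\<lambda>t. xor t k"])
       (auto simp: xor_invol xor_lt kl)
  also have "\<dots> = sum (\<lambda>t. - f t) {..<2^n}" by (rule sum.cong) (auto simp: fk)
  also have "\<dots> = - sum f {..<2^n}" by (simp add: sum_negf)
  finally show ?thesis using E by simp
qed

theorem lemma4p3:
  fixes n :: nat and psi :: "nat \<Rightarrow> complex"
  assumes "pure_state n psi"
  shows "support_p n psi \<subseteq> symp_perp n (Weyl_set n psi)"
proof
  fix x assume xs: "x \<in> support_p n psi"
  then have xF: "x \<in> F2vecs n" and E: "expval n psi x \<noteq> 0"
    by (auto simp: support_p_def p_psi_def)
  show "x \<in> symp_perp n (Weyl_set n psi)"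
    unfolding symp_perp_def
  proof (intro CollectI conjI ballI xF notI)
    fix y assume "y \<in> Weyl_set n psi" and od: "sympl n y x"
    then have "(\<forall>r<2^n. Weyl_apply n y psi r = 1 * psi r) \<or> (\<forall>r<2^n. Weyl_apply n y psi r = (-1) * psi r)"
      by (simp add: Weyl_set_def)
    then show False
    proof
      assume "\<forall>r<2^n. Weyl_apply n y psi r = 1 * psi r"
      from anticomm_zero[of 1, OF _ _ this od] E show False by simp
    next
      assume "\<forall>r<2^n. Weyl_apply n y psi r = (-1) * psi r"
      from anticomm_zero[of "-1", OF _ _ this od] E show False by simp
    qed
  qed
qed

end
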